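(* For every integer $k\ge 0$ there is a finite set $\mathcal F_k$ of bipartite graphs such that for every graph $G$, $\overline{\mu_\alpha}(G)\le k$ if and only if $G$ is $\mathcal F_k$-free.
   Context: All graphs are finite, simple and undirected. For a graph $G$, $\alpha(G)$ is the maximum size of an independent set and $i(G)$ is the minimum size of a maximal (with respect to inclusion) independent set; the independence gap is $\mu_\alpha(G)=\alpha(G)-i(G)$. The hereditary independence gap is $\overline{\mu_\alpha}(G)=\max\{\mu_\alpha(H): H \text{ an induced subgraph of } G\}$. For a set $\mathcal F$ of graphs, $G$ is $\mathcal F$-free if no induced subgraph of $G$ is isomorphic to a member of $\mathcal F$. *)

theory Defs
  imports Main
begin

type_synonym 'a sgraph = "'a set \<times> ('a \<times> 'a) set"

definition wf_graph :: "'a sgraph \<Rightarrow> bool" where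
  "wf_graph G \<longleftrightarrow> finite (fst G) \<and> snd G \<subseteq> fst G \<times> fst G \<and> sym (snd G) \<and> irrefl (snd G)"

definition independent :: "'a sgraph \<Rightarrow> 'a set \<Rightarrow> bool" where
  "independent G S \<longleftrightarrow> S \<subseteq> fst G \<and> (\<forall>x\<in>S. \<forall>y\<in>S. (x, y) \<notin> snd G)"

definition maximal_independent :: "'a sgraph \<Rightarrow> 'a set \<Rightarrow> bool" where
  "maximal_independent G S \<longleftrightarrow> independent G S \<and>
     (\<forall>T. independent G T \<and> S \<subseteq> T \<longrightarrow> T = S)"

definition alpha :: "'a sgraph \<Rightarrow> nat" where
  "alpha G = Max {card S | S. independent G S}"

definition indep_dom :: "'a sgraph \<Rightarrow> nat" where
  "indep_dom G = Min {card S | S. maximal_independent G S}"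

text \<open>independence gap (note i(G) \<le> alpha(G), so nat subtraction is exact)\<close>
definition mu_alpha :: "'a sgraph \<Rightarrow> nat" where
  "mu_alpha G = alpha G - indep_dom G"

definition induced :: "'a sgraph \<Rightarrow> 'a set \<Rightarrow> 'a sgraph" where
  "induced G U = (U, snd G \<inter> (U \<times> U))"

definition hered_mu_alpha :: "'a sgraph \<Rightarrow> nat" where
  "hered_mu_alpha G = Max {mu_alpha (induced G U) | U. U \<subseteq> fst G}"

definition graph_iso :: "'a sgraph \<Rightarrow> 'b sgraph \<Rightarrow> bool" where
  "graph_iso G H \<longleftrightarrow> (\<exists>f. bij_betw f (fst G) (fst H) \<and>
     (\<forall>x\<in>fst G. \<forall>y\<in>fst G. (x, y) \<in> snd G \<longleftrightarrow> (f x, f y) \<in> snd H))"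

definition has_induced :: "'a sgraph \<Rightarrow> 'b sgraph \<Rightarrow> bool" where
  "has_induced G H \<longleftrightarrow> (\<exists>U. U \<subseteq> fst G \<and> graph_iso (induced G U) H)"

definition free_of :: "'a sgraph \<Rightarrow> 'b sgraph set \<Rightarrow> bool" where
  "free_of G \<F> \<longleftrightarrow> (\<forall>H\<in>\<F>. \<not> has_induced G H)"

definition bipartite :: "'a sgraph \<Rightarrow> bool" where
  "bipartite G \<longleftrightarrow> (\<exists>A B. A \<union> B = fst G \<and> A \<inter> B = {} \<and>
     (\<forall>(x, y)\<in>snd G. (x \<in> A \<and> y \<in> B) \<or> (x \<in> B \<and> y \<in> A)))"

end

theory Submission
  imports Defs
begin


lemma fin_cards_indep: "finite (fst G) \<Longrightarrow> finite {card S | S. independent G S}"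
proof -
  assume f: "finite (fst G)"
  have "{card S | S. independent G S} \<subseteq> card ` Pow (fst G)" by (auto simp: independent_def)
  thus ?thesis using f finite_subset by blast
qed

lemma fin_cards_max: "finite (fst G) \<Longrightarrow> finite {card S | S. maximal_independent G S}"
proof -
  assume f: "finite (fst G)"
  have "{card S | S. maximal_independent G S} \<subseteq> card ` Pow (fst G)"
    by (auto simp: maximal_independent_def independent_def)
  thus ?thesis using f finite_subset by blast
qed

lemma alpha_ge: "finite (fst G) \<Longrightarrow> independent G S \<Longrightarrow> card S \<le> alpha G"
  unfolding alpha_def by (rule Max_ge) (auto intro: fin_cards_indep)

lemma idom_le: "finite (fst G) \<Longrightarrow> maximal_independent G S \<Longrightarrow> indep_dom G \<le> card S"
  unfolding indep_dom_def by (rule Min_le) (auto intro: fin_cards_max)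

lemma alpha_attained: assumes "finite (fst G)"
  obtains A where "independent G A" "card A = alpha G"
proof -
  have "independent G {}" by (simp add: independent_def)
  hence ne: "{card S | S. independent G S} \<noteq> {}" by blast
  have "alpha G \<in> {card S | S. independent G S}" unfolding alpha_def
    by (rule Max_in[OF fin_cards_indep[OF assms] ne])
  then obtain S where "independent G S" "alpha G = card S" by blast
  thus ?thesis using that by simp
qed

lemma max_card_maximal: assumes "finite (fst G)" "independent G A" "card A = alpha G"
  shows "maximal_independent G A"
  unfolding maximal_independent_def
proof (intro conjI allI impI)
  show "independent G A" by fact
  fix T assume "independent G T \<and> A \<subseteq> T"
  hence T: "independent G T" "A \<subseteq> T" by auto
  have fT: "finite T" using T(1) assms(1) finite_subset by (auto simp: independent_def)
  have "card T \<le> card A" using alpha_ge[OF assms(1) T(1)] assms(3) by simp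
  thus "T = A" using card_seteq[OF fT T(2)] by simp
qed

lemma idom_attained: assumes "finite (fst G)"
  obtains B where "maximal_independent G B" "card B = indep_dom G"
proof -
  obtain A where "independent G A" "card A = alpha G" using alpha_attained[OF assms] by blast
  hence "maximal_independent G A" using max_card_maximal assms by blast
  hence ne: "{card S | S. maximal_independent G S} \<noteq> {}" by blast
  have "indep_dom G \<in> {card S | S. maximal_independent G S}" unfolding indep_dom_def
    by (rule Min_in[OF fin_cards_max[OF assms] ne])
  then obtain S where "maximal_independent G S" "indep_dom G = card S" by blast
  thus ?thesis using that by simp
qed

lemma iso_sym: assumes "graph_iso G H" shows "graph_iso H G"
proof -
  obtain f where f: "bij_betw f (fst G) (fst H)"
    and e: "\<forall>x\<in>fst G. \<forall>y\<in>fst G. (x, y) \<in> snd G \<longleftrightarrow> (f x, f y) \<in> snd H"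
    using assms unfolding graph_iso_def by blast
  let ?g = "inv_into (fst G) f"
  have g: "bij_betw ?g (fst H) (fst G)" using f by (rule bij_betw_inv_into)
  have "\<forall>x\<in>fst H. \<forall>y\<in>fst H. (x, y) \<in> snd H \<longleftrightarrow> (?g x, ?g y) \<in> snd G"
  proof (intro ballI)
    fix x y assume x: "x \<in> fst H" and y: "y \<in> fst H"
    have gx: "?g x \<in> fst G" "f (?g x) = x" using x f
      by (auto simp: bij_betw_def inv_into_into f_inv_into_f)
    have gy: "?g y \<in> fst G" "f (?g y) = y" using y f
      by (auto simp: bij_betw_def inv_into_into f_inv_into_f)
    show "(x, y) \<in> snd H \<longleftrightarrow> (?g x, ?g y) \<in> snd G" using e gx gy by metis
  qed
  thus ?thesis using g unfolding graph_iso_def by blast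
qed

lemma iso_indep: assumes "bij_betw f (fst G) (fst H)"
    and e: "\<forall>x\<in>fst G. \<forall>y\<in>fst G. (x, y) \<in> snd G \<longleftrightarrow> (f x, f y) \<in> snd H"
    and "independent G S"
  shows "independent H (f ` S)"
  using assms unfolding independent_def bij_betw_def by blast

lemma iso_cards_sub:
  assumes "graph_iso G H"
  shows "{card S | S. independent G S} \<subseteq> {card S | S. independent H S}"
    and "{card S | S. maximal_independent G S} \<subseteq> {card S | S. maximal_independent H S}"
proof -
  obtain f where f: "bij_betw f (fst G) (fst H)"
    and e: "\<forall>x\<in>fst G. \<forall>y\<in>fst G. (x, y) \<in> snd G \<longleftrightarrow> (f x, f y) \<in> snd H"
    using assms unfolding graph_iso_def by blast
  have cardeq: "card (f ` S) = card S" if "S \<subseteq> fst G" for S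
    using f that by (meson bij_betw_def card_image inj_on_subset)
  show "{card S | S. independent G S} \<subseteq> {card S | S. independent H S}"
  proof
    fix n assume "n \<in> {card S | S. independent G S}"
    then obtain S where S: "independent G S" "n = card S" by blast
    have "independent H (f ` S)" using iso_indep[OF f e] S by blast
    moreover have "n = card (f ` S)" using S cardeq by (auto simp: independent_def)
    ultimately have "\<exists>S'. n = card S' \<and> independent H S'" by blast
    thus "n \<in> {card S | S. independent H S}" by simp
  qed
  show "{card S | S. maximal_independent G S} \<subseteq> {card S | S. maximal_independent H S}"
  proof
    fix n assume "n \<in> {card S | S. maximal_independent G S}"
    then obtain S where S: "maximal_independent G S" "n = card S" by blast
    have SG: "S \<subseteq> fst G" using S by (auto simp: maximal_independent_def independent_def)
    let ?g = "inv_into (fst G) f"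
    have g: "bij_betw ?g (fst H) (fst G)" using f by (rule bij_betw_inv_into)
    have eg: "\<forall>x\<in>fst H. \<forall>y\<in>fst H. (x, y) \<in> snd H \<longleftrightarrow> (?g x, ?g y) \<in> snd G"
    proof (intro ballI)
      fix x y assume x: "x \<in> fst H" and y: "y \<in> fst H"
      have gx: "?g x \<in> fst G" "f (?g x) = x" using x f
        by (auto simp: bij_betw_def inv_into_into f_inv_into_f)
      have gy: "?g y \<in> fst G" "f (?g y) = y" using y f
        by (auto simp: bij_betw_def inv_into_into f_inv_into_f)
      show "(x, y) \<in> snd H \<longleftrightarrow> (?g x, ?g y) \<in> snd G" using e gx gy by metis
    qed
    have "maximal_independent H (f ` S)"
      unfolding maximal_independent_def
    proof (intro conjI allI impI)
      show "independent H (f ` S)" using iso_indep[OF f e] S by (auto simp: maximal_independent_def)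
      fix T assume T: "independent H T \<and> f ` S \<subseteq> T"
      have TH: "T \<subseteq> fst H" using T by (auto simp: independent_def)
      have i1: "independent G (?g ` T)" using iso_indep[OF g eg] T by blast
      have "S \<subseteq> ?g ` T"
      proof
        fix s assume "s \<in> S"
        hence "f s \<in> T" "?g (f s) = s" using T SG f by (auto simp: bij_betw_def)
        thus "s \<in> ?g ` T" by force
      qed
      hence "?g ` T = S" using S i1 by (auto simp: maximal_independent_def)
      hence "f ` ?g ` T = f ` S" by simp
      moreover have "f ` ?g ` T = T" using TH f
        by (auto simp: bij_betw_def f_inv_into_f image_iff) (metis f_inv_into_f subsetD)
      ultimately show "T = f ` S" by simp
    qed
    moreover have "n = card (f ` S)" using S SG cardeq by simp
    ultimately have "\<exists>S'. n = card S' \<and> maximal_independent H S'" by blast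
    thus "n \<in> {card S | S. maximal_independent H S}" by simp
  qed
qed

lemma iso_mu: assumes "graph_iso G H" shows "mu_alpha G = mu_alpha H"
proof -
  have a: "{card S | S. independent G S} = {card S | S. independent H S}"
    using iso_cards_sub(1)[OF assms] iso_cards_sub(1)[OF iso_sym[OF assms]] by (rule subset_antisym)
  have b: "{card S | S. maximal_independent G S} = {card S | S. maximal_independent H S}"
    using iso_cards_sub(2)[OF assms] iso_cards_sub(2)[OF iso_sym[OF assms]] by (rule subset_antisym)
  show ?thesis unfolding mu_alpha_def alpha_def indep_dom_def a b ..
qed



lemma core:
  assumes wf: "wf_graph G" and U: "U \<subseteq> fst G"
    and A: "independent (induced G U) A" and B: "maximal_independent (induced G U) B"
    and c: "card B + m \<le> card A"
  shows "\<exists>W \<subseteq> U. card W \<le> 3*m \<and> bipartite (induced G W) \<and> m \<le> mu_alpha (induced G W)"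
proof -
  have finU: "finite U" using wf U finite_subset unfolding wf_graph_def by blast
  have symE: "sym (snd G)" and irE: "irrefl (snd G)" using wf unfolding wf_graph_def by auto
  have AU: "A \<subseteq> U" and Ai: "\<forall>x\<in>A. \<forall>y\<in>A. (x, y) \<notin> snd G"
    using A by (auto simp: independent_def induced_def)
  have BU: "B \<subseteq> U" and Bi: "\<forall>x\<in>B. \<forall>y\<in>B. (x, y) \<notin> snd G"
    using B by (auto simp: maximal_independent_def independent_def induced_def)
  have Bmax: "\<And>T. independent (induced G U) T \<Longrightarrow> B \<subseteq> T \<Longrightarrow> T = B"
    using B by (auto simp: maximal_independent_def)
  have finA: "finite A" "finite B" using AU BU finU finite_subset by auto
  define X where "X = A - B"
  define Y where "Y = B - A"
  have nb: "\<exists>y\<in>Y. (x, y) \<in> snd G" if x: "x \<in> X" for x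
  proof (rule ccontr)
    assume no: "\<not> (\<exists>y\<in>Y. (x, y) \<in> snd G)"
    have no2: "\<forall>y\<in>B. (x, y) \<notin> snd G"
    proof
      fix y assume y: "y \<in> B"
      show "(x, y) \<notin> snd G"
      proof (cases "y \<in> A")
        case True thus ?thesis using Ai x X_def by auto
      next
        case False thus ?thesis using no y Y_def by auto
      qed
    qed
    have no3: "\<forall>y\<in>B. (y, x) \<notin> snd G" using no2 symE by (auto dest: symD)
    have xx: "(x, x) \<notin> snd G" using irE by (auto simp: irrefl_def)
    have "independent (induced G U) (insert x B)"
      using BU Bi no2 no3 xx x AU X_def by (auto simp: independent_def induced_def)
    hence "insert x B = B" using Bmax by blast
    thus False using x X_def by auto
  qed
  define f where "f x = (SOME y. y \<in> Y \<and> (x, y) \<in> snd G)" for x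
  have fY: "f x \<in> Y" and fE: "(x, f x) \<in> snd G" if "x \<in> X" for x
    using someI_ex[OF nb[OF that, unfolded Bex_def]] unfolding f_def by auto
  have finX: "finite X" "finite Y" using finA X_def Y_def by auto
  have cX: "card X = card A - card (A \<inter> B)" unfolding X_def
    by (metis Diff_Int2 card_Diff_subset_Int finA(1) finite_Int inf.idem)
  have cY: "card Y = card B - card (A \<inter> B)" unfolding Y_def
    by (metis Diff_Int2 card_Diff_subset_Int finA(1) finite_Int inf.idem Int_commute)
  have "card (A \<inter> B) \<le> card B" using finA by (simp add: card_mono)
  hence cXY: "card Y + m \<le> card X" using cX cY c by linarith
  have "f ` X \<subseteq> Y" using fY by auto
  hence "card (f ` X) \<le> card Y" using finX card_mono by blast
  hence cfX: "card (f ` X) + m \<le> card X" using cXY by linarith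
  define g where "g = inv_into X f"
  define R where "R = g ` f ` X"
  have RX: "R \<subseteq> X" unfolding R_def g_def by (auto intro: inv_into_into)
  have cR: "card R = card (f ` X)" unfolding R_def g_def
    by (rule card_image) (rule inj_on_inv_into, simp)
  have "card (X - R) = card X - card R" using RX finX by (simp add: card_Diff_subset finite_subset)
  hence "m \<le> card (X - R)" using cR cfX by linarith
  then obtain E where E: "E \<subseteq> X - R" "card E = m" "finite E" by (rule obtain_subset_with_card_n)
  define R' where "R' = g ` f ` E"
  have R'R: "R' \<subseteq> R" unfolding R'_def R_def using E by auto
  have cR': "card R' = card (f ` E)" unfolding R'_def g_def
    by (rule card_image) (rule inj_on_inv_into, use E in auto)
  have cfE: "card (f ` E) \<le> m" using E card_image_le by metis
  define X' where "X' = E \<union> R'"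
  define Y' where "Y' = f ` E"
  have dis: "E \<inter> R' = {}" using E R'R by auto
  have finR': "finite R'" unfolding R'_def using E by auto
  have cX': "card X' = m + card Y'" unfolding X'_def Y'_def
    using card_Un_disjoint[OF E(3) finR' dis] E cR' by simp
  have X'X: "X' \<subseteq> X" unfolding X'_def using E R'R RX by auto
  have fX': "f ` X' \<subseteq> Y'"
  proof
    fix z assume "z \<in> f ` X'"
    then obtain x where x: "x \<in> X'" "z = f x" by blast
    show "z \<in> Y'"
    proof (cases "x \<in> E")
      case True thus ?thesis using x Y'_def by auto
    next
      case False
      then have "x \<in> R'" using x X'_def by auto
      then obtain y where y: "y \<in> f ` E" "x = g y" unfolding R'_def by auto
      have "y \<in> f ` X" using y E by auto
      hence "f (g y) = y" unfolding g_def by (rule f_inv_into_f)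
      thus ?thesis using x y Y'_def by simp
    qed
  qed
  have Y'Y: "Y' \<subseteq> Y" unfolding Y'_def using E fY by auto
  define W where "W = X' \<union> Y'"
  have WU: "W \<subseteq> U" unfolding W_def X_def Y_def using X'X Y'Y AU BU X_def Y_def by auto
  have finW: "finite W" using WU finU finite_subset by auto
  have "card W \<le> card X' + card Y'" unfolding W_def by (rule card_Un_le)
  moreover have "card Y' \<le> m" using cfE Y'_def by simp
  ultimately have cW: "card W \<le> 3 * m" using cX' by linarith
  define K where "K = induced G W"
  have finK: "finite (fst K)" using finW K_def by (simp add: induced_def)
  have iX': "independent K X'" using X'X X_def Ai unfolding K_def
    by (auto simp: independent_def induced_def W_def)
  have mY': "maximal_independent K Y'"
    unfolding maximal_independent_def
  proof (intro conjI allI impI)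
    show "independent K Y'" using Y'Y Y_def Bi unfolding K_def
      by (auto simp: independent_def induced_def W_def)
    fix T assume T: "independent K T \<and> Y' \<subseteq> T"
    show "T = Y'"
    proof (rule ccontr)
      assume "T \<noteq> Y'"
      then obtain t where t: "t \<in> T" "t \<notin> Y'" using T by blast
      have "t \<in> W" using T t K_def by (auto simp: independent_def induced_def)
      hence tX: "t \<in> X'" using t W_def by auto
      hence "f t \<in> Y'" using fX' by auto
      hence "f t \<in> T" "f t \<in> W" using T W_def by auto
      moreover have "(t, f t) \<in> snd G" using fE tX X'X by auto
      ultimately have "(t, f t) \<in> snd K" using \<open>t \<in> W\<close> unfolding K_def induced_def by simp
      moreover have "\<forall>x\<in>T. \<forall>y\<in>T. (x, y) \<notin> snd K" using T unfolding independent_def by blast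
      ultimately show False using t \<open>f t \<in> T\<close> by blast
    qed
  qed
  have "card X' \<le> alpha K" by (rule alpha_ge[OF finK iX'])
  moreover have "indep_dom K \<le> card Y'" by (rule idom_le[OF finK mY'])
  ultimately have mu: "m \<le> mu_alpha K" unfolding mu_alpha_def using cX' by linarith
  have XY: "X \<inter> Y = {}" unfolding X_def Y_def by auto
  have bip: "bipartite K" unfolding bipartite_def
  proof (intro exI conjI)
    show "X' \<union> Y' = fst K" unfolding K_def W_def induced_def by simp
    show "X' \<inter> Y' = {}" using XY X'X Y'Y by auto
    show "\<forall>(x, y)\<in>snd K. x \<in> X' \<and> y \<in> Y' \<or> x \<in> Y' \<and> y \<in> X'"
    proof (rule ballI)
      fix p assume p: "p \<in> snd K"
      obtain x y where pxy: "p = (x, y)" by (cases p)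
      have e': "(x, y) \<in> snd G" "x \<in> W" "y \<in> W" using p pxy unfolding K_def induced_def by auto
      have AB: "X' \<subseteq> A" "Y' \<subseteq> B" using X'X Y'Y X_def Y_def by auto
      have n1: "\<not> (x \<in> X' \<and> y \<in> X')"
      proof
        assume "x \<in> X' \<and> y \<in> X'"
        hence "x \<in> A" "y \<in> A" using AB by auto
        thus False using Ai e'(1) by blast
      qed
      have n2: "\<not> (x \<in> Y' \<and> y \<in> Y')"
      proof
        assume "x \<in> Y' \<and> y \<in> Y'"
        hence "x \<in> B" "y \<in> B" using AB by auto
        thus False using Bi e'(1) by blast
      qed
      have "x \<in> X' \<or> x \<in> Y'" "y \<in> X' \<or> y \<in> Y'" using e' W_def by auto
      hence "x \<in> X' \<and> y \<in> Y' \<or> x \<in> Y' \<and> y \<in> X'" using n1 n2 by blast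
      thus "case p of (x, y) \<Rightarrow> x \<in> X' \<and> y \<in> Y' \<or> x \<in> Y' \<and> y \<in> X'" using pxy by simp
    qed
  qed
  show ?thesis using WU cW bip mu K_def by blast
qed



lemma iso_bip: assumes "graph_iso G H" "snd H \<subseteq> fst H \<times> fst H" "bipartite G"
  shows "bipartite H"
proof -
  obtain f where f: "bij_betw f (fst G) (fst H)"
    and e: "\<forall>x\<in>fst G. \<forall>y\<in>fst G. (x, y) \<in> snd G \<longleftrightarrow> (f x, f y) \<in> snd H"
    using assms unfolding graph_iso_def by blast
  obtain P Q where PQ: "P \<union> Q = fst G" "P \<inter> Q = {}"
    and pe: "\<forall>(x, y)\<in>snd G. (x \<in> P \<and> y \<in> Q) \<or> (x \<in> Q \<and> y \<in> P)"
    using assms(3) unfolding bipartite_def by blast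
  have inj: "inj_on f (fst G)" and im: "f ` fst G = fst H" using f by (auto simp: bij_betw_def)
  show ?thesis unfolding bipartite_def
  proof (intro exI conjI)
    show "f ` P \<union> f ` Q = fst H" using PQ im by (simp add: image_Un[symmetric])
    show "f ` P \<inter> f ` Q = {}" using PQ inj by (auto simp: inj_on_def)
    show "\<forall>(x, y)\<in>snd H. x \<in> f ` P \<and> y \<in> f ` Q \<or> x \<in> f ` Q \<and> y \<in> f ` P"
    proof (rule ballI)
      fix p assume p: "p \<in> snd H"
      obtain u v where puv: "p = (u, v)" by (cases p)
      have uv: "(u, v) \<in> snd H" using p puv by simp
      hence "u \<in> fst H" "v \<in> fst H" using assms(2) by auto
      then obtain a b where ab: "a \<in> fst G" "b \<in> fst G" "u = f a" "v = f b" using im by blast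
      hence "(a, b) \<in> snd G" using e uv by auto
      hence "(a \<in> P \<and> b \<in> Q) \<or> (a \<in> Q \<and> b \<in> P)" using pe by auto
      hence "u \<in> f ` P \<and> v \<in> f ` Q \<or> u \<in> f ` Q \<and> v \<in> f ` P" using ab by auto
      thus "case p of (x, y) \<Rightarrow> x \<in> f ` P \<and> y \<in> f ` Q \<or> x \<in> f ` Q \<and> y \<in> f ` P" using puv by simp
    qed
  qed
qed

theorem mainTheorem15:
  fixes k :: nat
  shows "\<exists>\<F> :: nat sgraph set. finite \<F> \<and> (\<forall>H\<in>\<F>. wf_graph H \<and> bipartite H) \<and>
           (\<forall>G :: nat sgraph. wf_graph G \<longrightarrow> (hered_mu_alpha G \<le> k \<longleftrightarrow> free_of G \<F>))"
proof -
  define N where "N = 3 * (k + 1)"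
  define F :: "nat sgraph set" where
    "F = {H. wf_graph H \<and> bipartite H \<and> fst H \<subseteq> {..<N} \<and> k < mu_alpha H}"
  have "F \<subseteq> Pow {..<N} \<times> Pow ({..<N} \<times> {..<N})"
  proof
    fix H assume "H \<in> F"
    hence "fst H \<subseteq> {..<N}" "snd H \<subseteq> fst H \<times> fst H" unfolding F_def wf_graph_def by auto
    hence "fst H \<in> Pow {..<N}" "snd H \<in> Pow ({..<N} \<times> {..<N})" by auto
    thus "H \<in> Pow {..<N} \<times> Pow ({..<N} \<times> {..<N})" by (simp add: mem_Times_iff)
  qed
  hence finF: "finite F" by (rule finite_subset) auto
  have bF: "\<forall>H\<in>F. wf_graph H \<and> bipartite H" unfolding F_def by auto
  have main: "hered_mu_alpha G \<le> k \<longleftrightarrow> free_of G F" if wf: "wf_graph G" for G :: "nat sgraph"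
  proof -
    have finG: "finite (fst G)" using wf unfolding wf_graph_def by auto
    have seteq: "{mu_alpha (induced G U) | U. U \<subseteq> fst G} = (\<lambda>U. mu_alpha (induced G U)) ` Pow (fst G)"
      by auto
    have finS: "finite {mu_alpha (induced G U) | U. U \<subseteq> fst G}"
      unfolding seteq using finG by simp
    show ?thesis
    proof
      assume h: "hered_mu_alpha G \<le> k"
      show "free_of G F" unfolding free_of_def
      proof (intro ballI notI)
        fix H assume H: "H \<in> F" and hi: "has_induced G H"
        then obtain U where U: "U \<subseteq> fst G" "graph_iso (induced G U) H"
          unfolding has_induced_def by blast
        have "mu_alpha (induced G U) = mu_alpha H" by (rule iso_mu[OF U(2)])
        moreover have "k < mu_alpha H" using H unfolding F_def by simp
        ultimately have "k < mu_alpha (induced G U)" by simp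
        moreover have "mu_alpha (induced G U) \<le> hered_mu_alpha G"
          unfolding hered_mu_alpha_def by (rule Max_ge[OF finS]) (use U in blast)
        ultimately show False using h by linarith
      qed
    next
      assume fr: "free_of G F"
      show "hered_mu_alpha G \<le> k"
      proof (rule ccontr)
        assume "\<not> hered_mu_alpha G \<le> k"
        hence gt: "k < hered_mu_alpha G" by simp
        have "mu_alpha (induced G {}) \<in> {mu_alpha (induced G U) | U. U \<subseteq> fst G}" by blast
        hence ne: "{mu_alpha (induced G U) | U. U \<subseteq> fst G} \<noteq> {}" by blast
        have "hered_mu_alpha G \<in> {mu_alpha (induced G U) | U. U \<subseteq> fst G}"
          unfolding hered_mu_alpha_def by (rule Max_in[OF finS ne])
        then obtain U where U: "U \<subseteq> fst G" "hered_mu_alpha G = mu_alpha (induced G U)" by blast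
        have finU: "finite (fst (induced G U))" using U finG
          by (simp add: induced_def finite_subset)
        obtain A where A: "independent (induced G U) A" "card A = alpha (induced G U)"
          using alpha_attained[OF finU] by blast
        obtain B where B: "maximal_independent (induced G U) B" "card B = indep_dom (induced G U)"
          using idom_attained[OF finU] by blast
        have "k < card A - card B" using A B gt U unfolding mu_alpha_def by simp
        hence "card B + (k + 1) \<le> card A" by arith
        from core[OF wf U(1) A(1) B(1) this] obtain W where
          W: "W \<subseteq> U" "card W \<le> 3 * (k + 1)" "bipartite (induced G W)"
             "k + 1 \<le> mu_alpha (induced G W)" by (elim exE conjE)
        have "W \<subseteq> fst G" using W(1) U(1) by (rule order_trans)
        hence finW: "finite W" using finG by (rule finite_subset)
        obtain g where g: "bij_betw g W {0..<card W}" using ex_bij_betw_finite_nat[OF finW] by blast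
        have ginj: "inj_on g W" using g by (auto simp: bij_betw_def)
        define K where "K = induced G W"
        define H :: "nat sgraph" where "H = (g ` W, (\<lambda>(a, b). (g a, g b)) ` snd K)"
        have iso: "graph_iso K H" unfolding graph_iso_def
        proof (intro exI conjI)
          show "bij_betw g (fst K) (fst H)" using ginj unfolding K_def H_def induced_def
            by (simp add: bij_betw_def)
          show "\<forall>x\<in>fst K. \<forall>y\<in>fst K. ((x, y) \<in> snd K) = ((g x, g y) \<in> snd H)"
          proof (intro ballI iffI)
            fix x y assume "(x, y) \<in> snd K"
            thus "(g x, g y) \<in> snd H" unfolding H_def by force
          next
            fix x y assume xy: "x \<in> fst K" "y \<in> fst K" and "(g x, g y) \<in> snd H"
            then obtain a b where ab: "(a, b) \<in> snd K" "g x = g a" "g y = g b" unfolding H_def by auto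
            have "a \<in> W" "b \<in> W" "x \<in> W" "y \<in> W" using ab xy unfolding K_def induced_def by auto
            hence "x = a" "y = b" using ab ginj by (auto simp: inj_on_def)
            thus "(x, y) \<in> snd K" using ab by simp
          qed
        qed
        have sK: "snd K \<subseteq> W \<times> W" unfolding K_def induced_def by auto
        have symG: "sym (snd G)" and irG: "irrefl (snd G)" using wf unfolding wf_graph_def by auto
        have wfH: "wf_graph H" unfolding wf_graph_def
        proof (intro conjI)
          show "finite (fst H)" using finW H_def by simp
          show "snd H \<subseteq> fst H \<times> fst H" using sK unfolding H_def by auto
          show "sym (snd H)" unfolding sym_def
          proof (intro allI impI)
            fix u v assume "(u, v) \<in> snd H"
            then obtain a b where ab: "(a, b) \<in> snd K" "u = g a" "v = g b" unfolding H_def by auto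
            have "(b, a) \<in> snd K" using ab(1) symG unfolding K_def induced_def by (auto dest: symD)
            thus "(v, u) \<in> snd H" using ab unfolding H_def by force
          qed
          show "irrefl (snd H)" unfolding irrefl_def
          proof (intro allI notI)
            fix z assume "(z, z) \<in> snd H"
            then obtain a b where ab: "(a, b) \<in> snd K" "g a = z" "g b = z" unfolding H_def by auto
            hence "a \<in> W" "b \<in> W" using sK by auto
            hence "a = b" using ab ginj by (auto simp: inj_on_def)
            thus False using ab irG unfolding K_def induced_def irrefl_def by auto
          qed
        qed
        have sH: "snd H \<subseteq> fst H \<times> fst H" using wfH unfolding wf_graph_def by blast
        have bH: "bipartite H" using iso_bip[OF iso sH] W(3) unfolding K_def by blast
        have "fst H \<subseteq> {..<N}" using g W(2) unfolding H_def N_def bij_betw_def by auto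
        moreover have "mu_alpha H = mu_alpha K" using iso_mu[OF iso] by simp
        moreover have "k < mu_alpha H" using W(4) \<open>mu_alpha H = mu_alpha K\<close> unfolding K_def by simp
        ultimately have "H \<in> F" using wfH bH unfolding F_def by blast
        moreover have "has_induced G H" unfolding has_induced_def
          using iso K_def W(1) U(1) by blast
        ultimately show False using fr unfolding free_of_def by blast
      qed
    qed
  qed
  show ?thesis using finF bF main by blast
qed


end
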